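(* Let $X$ be a shift space and let $C$ be a right asymptotic class of $X$. Then $$\omega(C)=\sum_{u\in LS_\omega(C)}\bigl(\ell_C(u)-1\bigr),$$ where the left-hand side is finite if and only if the right-hand side is finite.
   Context: $A$ is a finite alphabet; a shift space is a closed shift-invariant subset $X\subseteq A^{\mathbb Z}$. For $x\in A^{\mathbb Z}$ write $x^+=x_0x_1\cdots\in A^{\mathbb N}$ and $X^+=\{x^+:x\in X\}$. Two elements $x,y\in X$ are right asymptotically equivalent if there are shifts $x'=\sigma^i(x)$, $y'=\sigma^j(y)$ ($i,j\in\mathbb Z$) with $x'^+=y'^+$. Each equivalence class is a union of orbits; a right asymptotic class is an equivalence class containing more than one orbit. For such a class $C$, $\omega(C)=\mathrm{Card}(o(C))-1$ where $o(C)$ is the set of orbits contained in $C$ (possibly infinite). For $u\in X^+$, $\ell_C(u)=\mathrm{Card}\{a\in A: x^+=au \text{ for some } x\in C\}$, and $LS_\omega(C)$ is the set of right infinite words $u$ with $\ell_C(u)\ge 2$. *)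

theory Defs
  imports "HOL-Analysis.Analysis"
begin

definition shift :: "(int \<Rightarrow> 'a) \<Rightarrow> (int \<Rightarrow> 'a)" where
  "shift x = (\<lambda>n. x (n + 1))"

definition shiftpow :: "int \<Rightarrow> (int \<Rightarrow> 'a) \<Rightarrow> (int \<Rightarrow> 'a)" where
  "shiftpow k x = (\<lambda>n. x (n + k))"

text \<open>Closedness in the product topology of discrete alphabets: a sequence all of whose
  central windows are matched by elements of X belongs to X.\<close>
definition closed_seq :: "(int \<Rightarrow> 'a) set \<Rightarrow> bool" where
  "closed_seq X \<longleftrightarrow> (\<forall>x. (\<forall>N::nat. \<exists>y\<in>X. \<forall>i. \<bar>i\<bar> \<le> int N \<longrightarrow> y i = x i) \<longrightarrow> x \<in> X)"

definition shift_space :: "(int \<Rightarrow> 'a::finite) set \<Rightarrow> bool" where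
  "shift_space X \<longleftrightarrow> closed_seq X \<and> shift ` X = X"

definition pos_part :: "(int \<Rightarrow> 'a) \<Rightarrow> (nat \<Rightarrow> 'a)" where
  "pos_part x = (\<lambda>n. x (int n))"

definition orbit :: "(int \<Rightarrow> 'a) \<Rightarrow> (int \<Rightarrow> 'a) set" where
  "orbit x = {shiftpow k x | k. True}"

definition right_asym :: "(int \<Rightarrow> 'a) set \<Rightarrow> ((int \<Rightarrow> 'a) \<times> (int \<Rightarrow> 'a)) set" where
  "right_asym X = {(x, y). x \<in> X \<and> y \<in> X \<and>
     (\<exists>i j. pos_part (shiftpow i x) = pos_part (shiftpow j y))}"

definition orbits_of :: "(int \<Rightarrow> 'a) set \<Rightarrow> (int \<Rightarrow> 'a) set set" where
  "orbits_of C = orbit ` C"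

definition right_asymptotic_class :: "(int \<Rightarrow> 'a) set \<Rightarrow> (int \<Rightarrow> 'a) set \<Rightarrow> bool" where
  "right_asymptotic_class X C \<longleftrightarrow> C \<in> X // right_asym X \<and> (infinite (orbits_of C) \<or> card (orbits_of C) \<ge> 2)"

definition omega :: "(int \<Rightarrow> 'a) set \<Rightarrow> ennreal" where
  "omega C = (if finite (orbits_of C) then of_nat (card (orbits_of C) - 1) else \<infinity>)"

definition ell :: "(int \<Rightarrow> 'a) set \<Rightarrow> (nat \<Rightarrow> 'a) \<Rightarrow> nat" where
  "ell C u = card {a. \<exists>x\<in>C. pos_part x = (\<lambda>n. if n = 0 then a else u (n - 1))}"

definition LS_omega :: "(int \<Rightarrow> 'a) set \<Rightarrow> (nat \<Rightarrow> 'a) set" where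
  "LS_omega C = {u. ell C u \<ge> 2}"

end

theory Submission
  imports Defs
begin



definition cns :: "'a \<Rightarrow> (nat \<Rightarrow> 'a) \<Rightarrow> (nat \<Rightarrow> 'a)" where
  "cns a u = (\<lambda>n. if n = 0 then a else u (n - 1))"

lemma shiftpow_add: "shiftpow a (shiftpow b x) = shiftpow (a + b) x"
  by (simp add: shiftpow_def add.assoc add.commute add.left_commute)

lemma shiftpow_0[simp]: "shiftpow 0 x = x"
  by (simp add: shiftpow_def)

lemma shiftpow_app: "shiftpow k x n = x (n + k)"
  by (simp add: shiftpow_def)

lemma pos_part_eq:
  "pos_part (shiftpow a x) = pos_part (shiftpow b y) \<longleftrightarrow> (\<forall>t\<ge>0. x (t + a) = y (t + b))"
proof
  assume h: "pos_part (shiftpow a x) = pos_part (shiftpow b y)"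
  show "\<forall>t\<ge>0. x (t + a) = y (t + b)"
  proof (intro allI impI)
    fix t :: int assume "t \<ge> 0"
    then have "t = int (nat t)" by simp
    moreover have "pos_part (shiftpow a x) (nat t) = pos_part (shiftpow b y) (nat t)" using h by simp
    ultimately show "x (t + a) = y (t + b)" unfolding pos_part_def shiftpow_def by metis
  qed
next
  assume "\<forall>t\<ge>0. x (t + a) = y (t + b)"
  then show "pos_part (shiftpow a x) = pos_part (shiftpow b y)"
    by (auto simp: pos_part_def shiftpow_def fun_eq_iff)
qed

lemma cns_lemma: "pos_part (shiftpow (k - 1) x) = cns (x (k - 1)) (pos_part (shiftpow k x))"
  apply (auto simp: cns_def pos_part_def shiftpow_def fun_eq_iff of_nat_diff)
  by (simp add: algebra_simps)

lemma cns_inj: "cns a u = cns b v \<longleftrightarrow> a = b \<and> u = v"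
proof
  assume h: "cns a u = cns b v"
  have "a = b" using fun_cong[OF h, of 0] by (simp add: cns_def)
  moreover have "u n = v n" for n using fun_cong[OF h, of "Suc n"] by (simp add: cns_def)
  ultimately show "a = b \<and> u = v" by auto
qed simp

lemma orbit_shift: "orbit (shiftpow d y) = orbit y"
proof -
  have "orbit (shiftpow d y) \<subseteq> orbit y"
    unfolding orbit_def by (auto simp: shiftpow_add)
  moreover have "orbit y \<subseteq> orbit (shiftpow d y)"
  proof
    fix w assume "w \<in> orbit y"
    then obtain k where "w = shiftpow k y" by (auto simp: orbit_def)
    then have "w = shiftpow (k - d) (shiftpow d y)" by (simp add: shiftpow_add)
    then show "w \<in> orbit (shiftpow d y)" by (auto simp: orbit_def)
  qed
  ultimately show ?thesis by blast
qed

lemma orbit_eqD: "orbit y = orbit w \<Longrightarrow> \<exists>d. w = shiftpow d y"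
proof -
  assume "orbit y = orbit w"
  moreover have "w \<in> orbit w" unfolding orbit_def by (auto intro: exI[of _ 0])
  ultimately show ?thesis by (auto simp: orbit_def)
qed

lemma pos_part_shift0: "pos_part x = pos_part (shiftpow 0 x)" by simp




locale acls =
  fixes C :: "(int \<Rightarrow> 'a::finite) set"
  assumes ne: "C \<noteq> {}"
    and shiftC: "x \<in> C \<Longrightarrow> shiftpow k x \<in> C"
    and asymC: "x \<in> C \<Longrightarrow> y \<in> C \<Longrightarrow> \<exists>i j. pos_part (shiftpow i x) = pos_part (shiftpow j y)"
    and closedC: "(\<And>N::nat. \<exists>y\<in>C. \<forall>t. t \<ge> - int N \<longrightarrow> y t = w t) \<Longrightarrow> w \<in> C"
begin

definition P where "P = pos_part ` C"

lemma P_shift: "x \<in> C \<Longrightarrow> pos_part (shiftpow k x) \<in> P"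
  unfolding P_def using shiftC by blast

lemma P_tail: assumes "cns a u \<in> P" shows "u \<in> P"
proof -
  obtain x where x: "x \<in> C" "pos_part x = cns a u" using assms unfolding P_def by auto
  have "pos_part (shiftpow (1 - 1) x) = cns (x (1 - 1)) (pos_part (shiftpow 1 x))"
    by (rule cns_lemma)
  then have "u = pos_part (shiftpow 1 x)" using x by (simp add: cns_inj)
  then show ?thesis using P_shift x by simp
qed

lemma P_ext: assumes "u \<in> P" shows "\<exists>a. cns a u \<in> P"
proof -
  obtain x where x: "x \<in> C" "pos_part x = u" using assms unfolding P_def by auto
  have "pos_part (shiftpow (0 - 1) x) = cns (x (0 - 1)) (pos_part (shiftpow 0 x))"
    by (rule cns_lemma)
  then show ?thesis using x P_shift[OF x(1), of "0-1"] by auto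
qed

definition Cons where
  "Cons z \<longleftrightarrow> (\<forall>k l. pos_part (shiftpow k z) = pos_part (shiftpow l z) \<longrightarrow> z (k - 1) = z (l - 1))"

lemma exists_cons: "\<exists>z\<in>C. Cons z"
proof -
  obtain z0 where z0: "z0 \<in> C" using ne by auto
  show ?thesis
  proof (cases "Cons z0")
    case True then show ?thesis using z0 by auto
  next
    case False
    then obtain k0 l0 where kl0: "pos_part (shiftpow k0 z0) = pos_part (shiftpow l0 z0)" "z0 (k0 - 1) \<noteq> z0 (l0 - 1)"
      unfolding Cons_def by auto
    then have "k0 \<noteq> l0" by auto
    then obtain k l where kl: "k < l" "pos_part (shiftpow k z0) = pos_part (shiftpow l z0)"
      using kl0(1) by (metis linorder_neqE)
    define p where "p = l - k"
    have p: "p > 0" using kl by (simp add: p_def)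
    have per1: "z0 (n + p) = z0 n" if "n \<ge> k" for n
    proof -
      have "\<forall>t\<ge>0. z0 (t + k) = z0 (t + l)" using kl(2) pos_part_eq by blast
      moreover have "n - k \<ge> 0" using that by simp
      ultimately have "z0 ((n - k) + k) = z0 ((n - k) + l)" by blast
      then show ?thesis by (simp add: p_def algebra_simps)
    qed
    have perq: "z0 (n + int q * p) = z0 n" if "n \<ge> k" for n q
    proof (induction q)
      case 0 then show ?case by simp
    next
      case (Suc q)
      have "z0 (n + int (Suc q) * p) = z0 ((n + int q * p) + p)" by (simp add: algebra_simps)
      also have "\<dots> = z0 (n + int q * p)" using per1 that p
        by (metis add_increasing2 mult_nonneg_nonneg of_nat_0_le_iff order_less_imp_le)
      finally show ?case using Suc by simp
    qed
    have perm: "z0 m = z0 (k + (m - k) mod p)" if "m \<ge> k" for m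
    proof -
      have q: "(m - k) div p \<ge> 0" using that p by (simp add: pos_imp_zdiv_nonneg_iff)
      have "m = (k + (m - k) mod p) + int (nat ((m - k) div p)) * p"
        using q by (simp add: algebra_simps)
      moreover have "k + (m - k) mod p \<ge> k" using p by simp
      ultimately show ?thesis using perq by metis
    qed
    define z where "z = (\<lambda>n. z0 (k + (n - k) mod p))"
    have zper: "z (n + p) = z n" for n
      proof -
      have "n + p - k = (n - k) + p" by simp
      then show ?thesis unfolding z_def by (simp only: mod_add_self2)
    qed
    have "z \<in> C"
    proof (rule closedC)
      fix N :: nat
      define s where "s = (int N + \<bar>k\<bar>) * p"
      have s: "s \<ge> int N + \<bar>k\<bar>" using p unfolding s_def
        by (metis abs_ge_zero add_nonneg_nonneg int_one_le_iff_zero_less mult.right_neutral mult_left_mono of_nat_0_le_iff)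
      have "\<forall>t. t \<ge> - int N \<longrightarrow> shiftpow s z0 t = z t"
      proof (intro allI impI)
        fix t assume t: "t \<ge> - int N"
        have "t + s \<ge> k" using s t by auto
        then have "shiftpow s z0 t = z0 (k + (t + s - k) mod p)" using perm by (simp add: shiftpow_def)
        also have "(t + s - k) mod p = (t - k) mod p"
          unfolding s_def by (metis add.commute add_diff_eq diff_add_eq mod_mult_self1)
        finally show "shiftpow s z0 t = z t" by (simp add: z_def)
      qed
      then show "\<exists>y\<in>C. \<forall>t. t \<ge> - int N \<longrightarrow> y t = z t" using shiftC[OF z0] by blast
    qed
    moreover have "Cons z"
      unfolding Cons_def
    proof (intro allI impI)
      fix a b assume "pos_part (shiftpow a z) = pos_part (shiftpow b z)"
      then have h: "\<forall>t\<ge>0. z (t + a) = z (t + b)" using pos_part_eq by blast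
      have "z (a - 1) = z (p - 1 + a)" using zper[of "a - 1"] by (simp add: algebra_simps)
      also have "\<dots> = z (p - 1 + b)" using h p by simp
      also have "\<dots> = z (b - 1)" using zper[of "b - 1"] by (simp add: algebra_simps)
      finally show "z (a - 1) = z (b - 1)" .
    qed
    ultimately show ?thesis by blast
  qed
qed

definition z where "z = (SOME z. z \<in> C \<and> Cons z)"

lemma z_in: "z \<in> C" and z_cons: "Cons z"
  using someI_ex[of "\<lambda>z. z \<in> C \<and> Cons z"] exists_cons unfolding z_def by auto

definition m where
  "m u = (if \<exists>k. pos_part (shiftpow k z) = u then z ((SOME k. pos_part (shiftpow k z) = u) - 1)
          else (SOME a. cns a u \<in> P))"

lemma M1: "m (pos_part (shiftpow k z)) = z (k - 1)"
proof -
  have ex: "\<exists>k'. pos_part (shiftpow k' z) = pos_part (shiftpow k z)" by blast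
  define k' where "k' = (SOME k'. pos_part (shiftpow k' z) = pos_part (shiftpow k z))"
  have "pos_part (shiftpow k' z) = pos_part (shiftpow k z)"
    unfolding k'_def by (rule someI_ex[OF ex])
  then have "z (k' - 1) = z (k - 1)" using z_cons unfolding Cons_def by blast
  then show ?thesis unfolding m_def k'_def using ex by simp
qed

lemma M2: assumes "u \<in> P" shows "cns (m u) u \<in> P"
proof (cases "\<exists>k. pos_part (shiftpow k z) = u")
  case True
  then obtain k where k: "pos_part (shiftpow k z) = u" by auto
  have "cns (m u) u = pos_part (shiftpow (k - 1) z)" using k M1 cns_lemma by metis
  then show ?thesis using P_shift z_in by simp
next
  case False
  then have "m u = (SOME a. cns a u \<in> P)" unfolding m_def by simp
  then show ?thesis using someI_ex[OF P_ext[OF assms]] by simp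
qed

end



context acls begin

definition bad where "bad x = {k. x (k - 1) \<noteq> m (pos_part (shiftpow k x))}"
definition E where "E = {(u, a). cns a u \<in> P \<and> a \<noteq> m u}"
definition ed where "ed x k = (pos_part (shiftpow k x), x (k - 1))"

lemma bad_E: assumes "x \<in> C" shows "k \<in> bad x \<longleftrightarrow> ed x k \<in> E"
proof -
  have "cns (x (k - 1)) (pos_part (shiftpow k x)) \<in> P"
    using cns_lemma[of k x] P_shift[OF assms, of "k - 1"] by simp
  then show ?thesis unfolding bad_def E_def ed_def by auto
qed

lemma bad_shift: "bad (shiftpow d x) = {k. k + d \<in> bad x}"
  unfolding bad_def by (auto simp: shiftpow_add shiftpow_app algebra_simps)

lemma bad_z: "bad z = {}"
  unfolding bad_def using M1 by auto

lemma bad_bounded: assumes "x \<in> C" shows "\<exists>K. \<forall>k\<in>bad x. k \<le> K"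
proof -
  obtain i j where ij: "pos_part (shiftpow i x) = pos_part (shiftpow j z)"
    using asymC[OF assms z_in] by blast
  then have h: "\<forall>t\<ge>0. x (t + i) = z (t + j)" using pos_part_eq by blast
  have "k \<notin> bad x" if "k > i" for k
  proof -
    have "\<forall>t\<ge>0. x (t + k) = z (t + (k - i + j))"
    proof (intro allI impI)
      fix t :: int assume "t \<ge> 0"
      then have "t + k - i \<ge> 0" using that by simp
      then have "x ((t + k - i) + i) = z ((t + k - i) + j)" using h by blast
      then show "x (t + k) = z (t + (k - i + j))" by (simp add: algebra_simps)
    qed
    then have e1: "pos_part (shiftpow k x) = pos_part (shiftpow (k - i + j) z)" using pos_part_eq by blast
    have "k - 1 - i \<ge> 0" using that by simp
    then have "x ((k - 1 - i) + i) = z ((k - 1 - i) + j)" using h by blast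
    then have "x (k - 1) = z ((k - i + j) - 1)" by (simp add: algebra_simps)
    then show ?thesis unfolding bad_def using e1 M1 by simp
  qed
  then show ?thesis by (meson not_le)
qed

lemma bad_empty: assumes "x \<in> C" "bad x = {}" shows "orbit x = orbit z"
proof -
  obtain i j where ij: "pos_part (shiftpow i x) = pos_part (shiftpow j z)"
    using asymC[OF assms(1) z_in] by blast
  have ind: "pos_part (shiftpow (i - int n) x) = pos_part (shiftpow (j - int n) z)" for n
  proof (induction n)
    case 0 then show ?case using ij by simp
  next
    case (Suc n)
    have nb: "x ((i - int n) - 1) = m (pos_part (shiftpow (i - int n) x))"
      using assms(2) unfolding bad_def by blast
    have "pos_part (shiftpow ((i - int n) - 1) x) = cns (x ((i - int n) - 1)) (pos_part (shiftpow (i - int n) x))"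
      by (rule cns_lemma)
    also have "\<dots> = cns (z ((j - int n) - 1)) (pos_part (shiftpow (j - int n) z))"
      using nb Suc M1 by simp
    also have "\<dots> = pos_part (shiftpow ((j - int n) - 1) z)" using cns_lemma by metis
    finally show ?case by (simp add: algebra_simps)
  qed
  have "x t = shiftpow (j - i) z t" for t
  proof -
    define n where "n = nat (i - t)"
    have h: "\<forall>s\<ge>0. x (s + (i - int n)) = z (s + (j - int n))" using ind pos_part_eq by blast
    have "t - (i - int n) \<ge> 0" unfolding n_def by simp
    then have "x ((t - (i - int n)) + (i - int n)) = z ((t - (i - int n)) + (j - int n))" using h by blast
    then show ?thesis by (simp add: shiftpow_app algebra_simps)
  qed
  then have "x = shiftpow (j - i) z" by auto
  then show ?thesis using orbit_shift by simp
qed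

definition good where
  "good u a w \<longleftrightarrow> pos_part w = u \<and> w (-1) = a \<and> (\<forall>k<0. w (k - 1) = m (pos_part (shiftpow k w)))"

lemma good_unique: assumes "good u a w" "good u a w'" shows "w = w'"
proof -
  have ind: "pos_part (shiftpow (- int n) w) = pos_part (shiftpow (- int n) w')" for n
  proof (induction n)
    case 0 then show ?case using assms unfolding good_def by simp
  next
    case (Suc n)
    have l1: "w (- int n - 1) = w' (- int n - 1)"
    proof (cases "n = 0")
      case True then show ?thesis using assms unfolding good_def by simp
    next
      case False
      then have "- int n < 0" by simp
      then show ?thesis using assms Suc unfolding good_def by simp
    qed
    have "pos_part (shiftpow (- int n - 1) w) = cns (w (- int n - 1)) (pos_part (shiftpow (- int n) w))"
      by (rule cns_lemma)
    also have "\<dots> = cns (w' (- int n - 1)) (pos_part (shiftpow (- int n) w'))" using l1 Suc by simp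
    also have "\<dots> = pos_part (shiftpow (- int n - 1) w')" using cns_lemma by metis
    finally have r: "pos_part (shiftpow (- int n - 1) w) = pos_part (shiftpow (- int n - 1) w')" .
    have e: "- int (Suc n) = - int n - 1" by simp
    show ?case unfolding e by (rule r)
  qed
  have "w t = w' t" for t
  proof -
    define n where "n = nat (- t)"
    have h: "\<forall>s\<ge>0. w (s + (- int n)) = w' (s + (- int n))" using ind pos_part_eq by blast
    have "t + int n \<ge> 0" unfolding n_def by simp
    then have "w ((t + int n) + (- int n)) = w' ((t + int n) + (- int n))" using h by blast
    then show ?thesis by simp
  qed
  then show ?thesis by auto
qed

lemma good_ex: assumes "cns a u \<in> P" shows "\<exists>w\<in>C. good u a w"
proof -
  define s where "s = rec_nat (cns a u) (\<lambda>n v. cns (m v) v)"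
  have s0: "s 0 = cns a u" and sS: "s (Suc n) = cns (m (s n)) (s n)" for n
    unfolding s_def by simp_all
  have sP: "s n \<in> P" for n
    by (induction n) (use assms M2 s0 sS in auto)
  define w where "w = (\<lambda>t. if t \<ge> 0 then u (nat t) else s (nat (- t - 1)) 0)"
  have wpos: "pos_part w = u" unfolding w_def pos_part_def by auto
  have wm1: "w (-1) = a" unfolding w_def using s0 by (simp add: cns_def)
  have key: "pos_part (shiftpow (- int n - 1) w) = s n" for n
  proof (induction n)
    case 0
    have "pos_part (shiftpow (0 - 1) w) = cns (w (0 - 1)) (pos_part (shiftpow 0 w))" by (rule cns_lemma)
    then show ?case using wpos wm1 s0 by simp
  next
    case (Suc n)
    have "pos_part (shiftpow ((- int n - 1) - 1) w) = cns (w ((- int n - 1) - 1)) (pos_part (shiftpow (- int n - 1) w))"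
      by (rule cns_lemma)
    moreover have "w ((- int n - 1) - 1) = s (Suc n) 0" unfolding w_def
      by (simp add: nat_add_distrib)
    moreover have "s (Suc n) 0 = m (s n)" using sS by (simp add: cns_def)
    ultimately have r: "pos_part (shiftpow ((- int n - 1) - 1) w) = s (Suc n)" using Suc sS[of n] by metis
    have e: "- int (Suc n) - 1 = (- int n - 1) - 1" by simp
    show ?case unfolding e by (rule r)
  qed
  have wC: "w \<in> C"
  proof (rule closedC)
    fix N :: nat
    obtain y where y: "y \<in> C" "pos_part y = s N" using sP[of N] unfolding P_def by auto
    have h: "\<forall>t\<ge>0. w (t + (- int N - 1)) = y (t + 0)"
      using key[of N] y(2) pos_part_eq[of "- int N - 1" w 0 y] by simp
    have "\<forall>t. t \<ge> - int N \<longrightarrow> shiftpow (int N + 1) y t = w t"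
    proof (intro allI impI)
      fix t assume "t \<ge> - int N"
      then have "t + int N + 1 \<ge> 0" by simp
      then have "w ((t + int N + 1) + (- int N - 1)) = y ((t + int N + 1) + 0)" using h by blast
      then show "shiftpow (int N + 1) y t = w t" by (simp add: shiftpow_app algebra_simps)
    qed
    then show "\<exists>y\<in>C. \<forall>t. t \<ge> - int N \<longrightarrow> y t = w t" using shiftC[OF y(1)] by blast
  qed
  have "\<forall>k<0. w (k - 1) = m (pos_part (shiftpow k w))"
  proof (intro allI impI)
    fix k :: int assume k: "k < 0"
    define n where "n = nat (- k - 1)"
    have kn: "k = - int n - 1" unfolding n_def using k by simp
    have nn: "nat (- (k - 1) - 1) = Suc n" unfolding n_def using k by arith
    have "w (k - 1) = s (Suc n) 0" unfolding w_def using k nn by simp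
    also have "\<dots> = m (s n)" using sS by (simp add: cns_def)
    finally show "w (k - 1) = m (pos_part (shiftpow k w))" using key kn by simp
  qed
  then show ?thesis using wC wpos wm1 unfolding good_def by blast
qed

end



context acls begin

definition Psi where "Psi e = (SOME w. w \<in> C \<and> good (fst e) (snd e) w)"

lemma Psi_good: assumes "e \<in> E" shows "Psi e \<in> C" "good (fst e) (snd e) (Psi e)"
proof -
  have "cns (snd e) (fst e) \<in> P" using assms unfolding E_def by auto
  then have "\<exists>w. w \<in> C \<and> good (fst e) (snd e) w" using good_ex by blast
  then have "Psi e \<in> C \<and> good (fst e) (snd e) (Psi e)" unfolding Psi_def by (rule someI_ex)
  then show "Psi e \<in> C" "good (fst e) (snd e) (Psi e)" by auto
qed

lemma Psi_bad: assumes "e \<in> E" shows "0 \<in> bad (Psi e)" "k < 0 \<Longrightarrow> k \<notin> bad (Psi e)"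
proof -
  have g: "good (fst e) (snd e) (Psi e)" by (rule Psi_good[OF assms])
  have "snd e \<noteq> m (fst e)" using assms unfolding E_def by auto
  then show "0 \<in> bad (Psi e)" using g unfolding good_def bad_def by simp
  show "k < 0 \<Longrightarrow> k \<notin> bad (Psi e)" using g unfolding good_def bad_def by simp
qed

lemma Psi_inj: "inj_on (\<lambda>e. orbit (Psi e)) E"
proof (rule inj_onI)
  fix e1 e2 assume e: "e1 \<in> E" "e2 \<in> E" "orbit (Psi e1) = orbit (Psi e2)"
  then obtain d where d: "Psi e2 = shiftpow d (Psi e1)" using orbit_eqD by blast
  then have d2: "Psi e1 = shiftpow (- d) (Psi e2)" by (simp add: shiftpow_add)
  have "0 \<in> bad (Psi e2)" using Psi_bad(1)[OF e(2)] .
  then have "d \<in> bad (Psi e1)" using d bad_shift by simp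
  then have "\<not> d < 0" using Psi_bad(2)[OF e(1)] by blast
  moreover have "0 \<in> bad (Psi e1)" using Psi_bad(1)[OF e(1)] .
  then have "- d \<in> bad (Psi e2)" using d2 bad_shift by simp
  then have "\<not> - d < 0" using Psi_bad(2)[OF e(2)] by blast
  ultimately have "d = 0" by simp
  then have "Psi e1 = Psi e2" using d by simp
  then show "e1 = e2" using Psi_good(2)[OF e(1)] Psi_good(2)[OF e(2)] unfolding good_def
    by (metis prod.collapse)
qed

lemma Psi_not_z: assumes "e \<in> E" shows "orbit (Psi e) \<noteq> orbit z"
proof
  assume "orbit (Psi e) = orbit z"
  then obtain d where "Psi e = shiftpow d z" using orbit_eqD by metis
  then have "bad (Psi e) = {}" using bad_shift bad_z by simp
  then show False using Psi_bad(1)[OF assms] by simp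
qed

lemma cover: assumes fE: "finite E" and x: "x \<in> C"
  shows "orbit x \<in> insert (orbit z) ((\<lambda>e. orbit (Psi e)) ` E)"
proof (cases "bad x = {}")
  case True then show ?thesis using bad_empty x by simp
next
  case False
  obtain K where K: "\<forall>k\<in>bad x. k \<le> K" using bad_bounded[OF x] by blast
  have inj: "inj_on (ed x) (bad x)"
  proof (rule ccontr)
    assume "\<not> inj_on (ed x) (bad x)"
    then obtain k0 l0 where kl0: "k0 \<in> bad x" "l0 \<in> bad x" "k0 \<noteq> l0" "ed x k0 = ed x l0"
      unfolding inj_on_def by blast
    have "\<exists>k l. k \<in> bad x \<and> k < l \<and> ed x k = ed x l"
    proof (cases "k0 < l0")
      case True then show ?thesis using kl0 by blast
    next
      case False
      then have "l0 < k0" using kl0(3) by simp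
      then show ?thesis using kl0 by metis
    qed
    then obtain k l where kl: "k \<in> bad x" "k < l" "ed x k = ed x l" by blast
    define p where "p = l - k"
    have p: "p > 0" using kl by (simp add: p_def)
    have eqs: "pos_part (shiftpow k x) = pos_part (shiftpow l x)" "x (k - 1) = x (l - 1)"
      using kl(3) unfolding ed_def by auto
    have per1: "x (n + p) = x n" if "n \<ge> k - 1" for n
    proof (cases "n = k - 1")
      case True then show ?thesis using eqs(2) by (simp add: p_def)
    next
      case False
      then have "n - k \<ge> 0" using that by simp
      moreover have "\<forall>t\<ge>0. x (t + k) = x (t + l)" using eqs(1) pos_part_eq by blast
      ultimately have "x ((n - k) + k) = x ((n - k) + l)" by blast
      then show ?thesis by (simp add: p_def algebra_simps)
    qed
    have perq: "x (n + int q * p) = x n" if "n \<ge> k - 1" for n q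
    proof (induction q)
      case 0 then show ?case by simp
    next
      case (Suc q)
      have "x (n + int (Suc q) * p) = x ((n + int q * p) + p)" by (simp add: algebra_simps)
      also have "\<dots> = x (n + int q * p)" using per1 that p
        by (metis add_increasing2 mult_nonneg_nonneg of_nat_0_le_iff order_less_imp_le)
      finally show ?case using Suc by simp
    qed
    define q where "q = nat (K - k) + 1"
    have edq: "ed x (k + int q * p) = ed x k"
    proof -
      have "\<forall>t\<ge>0. x (t + (k + int q * p)) = x (t + k)"
      proof (intro allI impI)
        fix t :: int assume "t \<ge> 0"
        then have "t + k \<ge> k - 1" by simp
        then have "x ((t + k) + int q * p) = x (t + k)" by (rule perq)
        then show "x (t + (k + int q * p)) = x (t + k)" by (simp add: add.assoc)
      qed
      then have "pos_part (shiftpow (k + int q * p) x) = pos_part (shiftpow k x)" using pos_part_eq by blast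
      moreover have "x (k + int q * p - 1) = x (k - 1)" using perq[of "k - 1" q] by (simp add: algebra_simps)
      ultimately show ?thesis unfolding ed_def by simp
    qed
    have "k + int q * p \<in> bad x" using kl(1) edq bad_E[OF x] by simp
    then have "k + int q * p \<le> K" using K by blast
    moreover have "int q * p \<ge> int q" using p
      by (metis mult.right_neutral mult_left_mono of_nat_0_le_iff zero_less_iff_neq_zero int_one_le_iff_zero_less)
    moreover have "int q > K - k" unfolding q_def by simp
    ultimately show False by simp
  qed
  have "ed x ` bad x \<subseteq> E" using bad_E[OF x] by auto
  then have "finite (ed x ` bad x)" using finite_subset fE by blast
  then have fin: "finite (bad x)" using finite_image_iff[OF inj] by simp
  define k0 where "k0 = Min (bad x)"
  have k0: "k0 \<in> bad x" "\<And>k. k \<in> bad x \<Longrightarrow> k0 \<le> k" unfolding k0_def using fin False by auto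
  define y where "y = shiftpow k0 x"
  have yC: "y \<in> C" unfolding y_def using shiftC[OF x] .
  have by0: "0 \<in> bad y" unfolding y_def bad_shift using k0 by simp
  have byn: "k \<notin> bad y" if "k < 0" for k
  proof
    assume "k \<in> bad y"
    then have "k + k0 \<in> bad x" unfolding y_def bad_shift by simp
    then have "k0 \<le> k + k0" by (rule k0(2))
    then show False using that by simp
  qed
  define e where "e = (pos_part y, y (-1))"
  have eE: "e \<in> E" using bad_E[OF yC, of 0] by0 unfolding e_def ed_def by simp
  have gy: "good (fst e) (snd e) y" unfolding good_def e_def using byn unfolding bad_def by auto
  have "Psi e = y" using good_unique[OF Psi_good(2)[OF eE] gy] .
  then have "orbit x = orbit (Psi e)" unfolding y_def using orbit_shift[of k0 x] by simp
  then show ?thesis using eE by blast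
qed

lemma orbits_E:
  "(finite (orbit ` C) \<longleftrightarrow> finite E) \<and> (finite E \<longrightarrow> card (orbit ` C) = card E + 1)"
proof -
  define F where "F = (\<lambda>e. orbit (Psi e)) ` E"
  have FC: "insert (orbit z) F \<subseteq> orbit ` C"
  proof
    fix Ob assume "Ob \<in> insert (orbit z) F"
    then have "Ob = orbit z \<or> (\<exists>e\<in>E. Ob = orbit (Psi e))" unfolding F_def by blast
    then show "Ob \<in> orbit ` C" using Psi_good(1) z_in by blast
  qed
  have zF: "orbit z \<notin> F"
  proof
    assume "orbit z \<in> F"
    then obtain e where "e \<in> E" "orbit z = orbit (Psi e)" unfolding F_def by blast
    then show False using Psi_not_z by metis
  qed
  have cF: "card F = card E" unfolding F_def by (rule card_image[OF Psi_inj])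
  show ?thesis
  proof (cases "finite E")
    case True
    have "orbit ` C \<subseteq> insert (orbit z) F"
    proof
      fix Ob assume "Ob \<in> orbit ` C"
      then obtain x where "x \<in> C" "Ob = orbit x" by blast
      then show "Ob \<in> insert (orbit z) F" unfolding F_def using cover[OF True] by simp
    qed
    then have eq: "orbit ` C = insert (orbit z) F" using FC by (rule subset_antisym)
    have "finite F" unfolding F_def using True by simp
    then show ?thesis using eq zF cF True by simp
  next
    case False
    then have "infinite F" unfolding F_def using finite_image_iff[OF Psi_inj] by simp
    then have "infinite (orbit ` C)" using FC by (meson finite_subset subset_insertI order_trans)
    then show ?thesis using False by simp
  qed
qed

end



context acls begin

lemma ell_eq: "ell C u = card {a. cns a u \<in> P}"
proof -
  have "{a. \<exists>x\<in>C. pos_part x = (\<lambda>n. if n = 0 then a else u (n - 1))} = {a. cns a u \<in> P}"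
    unfolding P_def cns_def image_def by (auto simp: eq_commute)
  then show ?thesis unfolding ell_def by simp
qed

definition Bu where "Bu u = {a. cns a u \<in> P \<and> a \<noteq> m u}"

lemma card_Bu: "card (Bu u) = ell C u - 1"
proof (cases "u \<in> P")
  case True
  have "m u \<in> {a. cns a u \<in> P}" using M2[OF True] by simp
  moreover have "Bu u = {a. cns a u \<in> P} - {m u}" unfolding Bu_def by auto
  ultimately show ?thesis using ell_eq by (simp add: card_Diff_singleton)
next
  case False
  then have "{a. cns a u \<in> P} = {}" using P_tail by blast
  moreover then have "Bu u = {}" unfolding Bu_def by auto
  ultimately show ?thesis using ell_eq by simp
qed

definition U where "U = {u. Bu u \<noteq> {}}"

lemma E_Sigma: "E = Sigma U Bu"
  unfolding E_def U_def Bu_def by auto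

lemma U_LS: "U \<subseteq> LS_omega C"
proof
  fix u assume "u \<in> U"
  then have "Bu u \<noteq> {}" unfolding U_def by simp
  then have "card (Bu u) \<ge> 1" by (simp add: Suc_le_eq card_gt_0_iff)
  then show "u \<in> LS_omega C" unfolding LS_omega_def using card_Bu by simp
qed

lemma sum_E: "(\<Sum>\<^sub>\<infinity>u\<in>LS_omega C. ennreal (real (ell C u - 1))) = (if finite E then of_nat (card E) else \<infinity>)"
proof -
  have "(\<Sum>\<^sub>\<infinity>u\<in>LS_omega C. ennreal (real (ell C u - 1))) = (\<Sum>\<^sub>\<infinity>u\<in>U. (of_nat (card (Bu u)) :: ennreal))"
  proof (rule infsum_cong_neutral)
    fix u assume "u \<in> U - LS_omega C" then show "(of_nat (card (Bu u)) :: ennreal) = 0" using U_LS by blast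
  next
    fix u assume "u \<in> LS_omega C - U"
    then have "Bu u = {}" unfolding U_def by simp
    then have "ell C u - 1 = 0" using card_Bu[of u] by simp
    then show "ennreal (real (ell C u - 1)) = 0" by simp
  next
    fix u assume "u \<in> LS_omega C \<inter> U"
    show "ennreal (real (ell C u - 1)) = of_nat (card (Bu u))"
      using card_Bu by (simp add: ennreal_of_nat_eq_real_of_nat)
  qed
  also have "\<dots> = (if finite E then of_nat (card E) else \<infinity>)"
  proof (cases "finite U")
    case True
    have fB: "\<forall>u\<in>U. finite (Bu u)" by simp
    then have "finite E" unfolding E_Sigma using True by simp
    moreover have "card E = (\<Sum>u\<in>U. card (Bu u))" unfolding E_Sigma using True fB by simp
    ultimately show ?thesis using True by simp
  next
    case False
    have "fst ` E = U" unfolding E_Sigma U_def by force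
    then have "infinite E" using False by (metis finite_imageI)
    moreover have "(\<Sum>\<^sub>\<infinity>u\<in>U. (of_nat (card (Bu u)) :: ennreal)) = \<infinity>"
    proof (rule infsum_superconst_infinite_ennreal[where b = 1])
      fix u assume "u \<in> U"
      then have "card (Bu u) \<ge> 1" unfolding U_def by (simp add: Suc_le_eq card_gt_0_iff)
      then show "(of_nat (card (Bu u)) :: ennreal) \<ge> 1" by (metis of_nat_1 of_nat_le_iff)
    qed (use False in auto)
    ultimately show ?thesis by simp
  qed
  finally show ?thesis .
qed

lemma main: "omega C = (\<Sum>\<^sub>\<infinity>u\<in>LS_omega C. ennreal (real (ell C u - 1)))"
  unfolding sum_E omega_def orbits_of_def using orbits_E by auto

end

lemma asym_char: "(x, y) \<in> right_asym X \<longleftrightarrow> x \<in> X \<and> y \<in> X \<and> (\<exists>i j. \<forall>t\<ge>0. x (t + i) = y (t + j))"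
  unfolding right_asym_def pos_part_eq by simp

lemma asym_trans: assumes "(x, y) \<in> right_asym X" "(y, w) \<in> right_asym X" shows "(x, w) \<in> right_asym X"
proof -
  have m: "x \<in> X" "w \<in> X" using assms unfolding asym_char by simp_all
  obtain i j where h1: "\<forall>t\<ge>0. x (t + i) = y (t + j)" using assms(1) unfolding asym_char by blast
  obtain k l where h2: "\<forall>t\<ge>0. y (t + k) = w (t + l)" using assms(2) unfolding asym_char by blast
  define M where "M = max j k"
  have "\<forall>t\<ge>0. x (t + (i + M - j)) = w (t + (l + M - k))"
  proof (intro allI impI)
    fix t :: int assume t: "t \<ge> 0"
    have a: "t + M - j \<ge> 0" using t unfolding M_def by simp
    have b: "t + M - k \<ge> 0" using t unfolding M_def by simp
    have "x (t + (i + M - j)) = x ((t + M - j) + i)" by (simp add: algebra_simps)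
    also have "\<dots> = y ((t + M - j) + j)" using h1 a by blast
    also have "\<dots> = y ((t + M - k) + k)" by simp
    also have "\<dots> = w ((t + M - k) + l)" using h2 b by blast
    also have "\<dots> = w (t + (l + M - k))" by (simp add: algebra_simps)
    finally show "x (t + (i + M - j)) = w (t + (l + M - k))" .
  qed
  then show ?thesis unfolding asym_char using m by blast
qed

lemma asym_sym: assumes "(x, y) \<in> right_asym X" shows "(y, x) \<in> right_asym X"
proof -
  obtain i j where "x \<in> X" "y \<in> X" "pos_part (shiftpow i x) = pos_part (shiftpow j y)"
    using assms unfolding right_asym_def by blast
  then show ?thesis unfolding right_asym_def by (metis (mono_tags, lifting) case_prodI mem_Collect_eq)
qed

lemma asym_refl: assumes "x \<in> X" shows "(x, x) \<in> right_asym X"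
  unfolding right_asym_def using assms by blast

lemma shift_X: assumes "shift_space X" "x \<in> X" shows "shiftpow k x \<in> X"
proof -
  have sX: "shift ` X = X" using assms(1) unfolding shift_space_def by simp
  have up: "shiftpow 1 y \<in> X" if "y \<in> X" for y
  proof -
    have "shift y \<in> shift ` X" using that by (rule imageI)
    then have "shift y \<in> X" unfolding sX .
    moreover have "shift y = shiftpow 1 y" unfolding shift_def shiftpow_def by simp
    ultimately show ?thesis by simp
  qed
  have down: "shiftpow (-1) y \<in> X" if "y \<in> X" for y
  proof -
    have "y \<in> shift ` X" unfolding sX by (rule that)
    then obtain v where v: "v \<in> X" "y = shift v" by (rule imageE) blast
    have "shiftpow (-1) y = v" unfolding v(2) shift_def shiftpow_def by simp
    then show ?thesis using v by simp
  qed
  have pos: "shiftpow (int n) x \<in> X" for n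
  proof (induction n)
    case 0 then show ?case using assms by simp
  next
    case (Suc n)
    have "shiftpow (int (Suc n)) x = shiftpow 1 (shiftpow (int n) x)" unfolding shiftpow_add by (simp add: algebra_simps)
    then show ?case using up Suc by simp
  qed
  have neg: "shiftpow (- int n) x \<in> X" for n
  proof (induction n)
    case 0 then show ?case using assms by simp
  next
    case (Suc n)
    have "shiftpow (- int (Suc n)) x = shiftpow (-1) (shiftpow (- int n) x)" unfolding shiftpow_add by (simp add: algebra_simps)
    then show ?case using down Suc by simp
  qed
  show ?thesis
  proof (cases "k \<ge> 0")
    case True then show ?thesis using pos[of "nat k"] by simp
  next
    case False then show ?thesis using neg[of "nat (- k)"] by simp
  qed
qed

theorem mainTheorem5:
  fixes X C :: "(int \<Rightarrow> 'a::finite) set"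
  assumes "shift_space X"
    and "right_asymptotic_class X C"
  shows "omega C = (\<Sum>\<^sub>\<infinity>u\<in>LS_omega C. ennreal (real (ell C u - 1)))"
proof -
  have "C \<in> X // right_asym X" using assms(2) unfolding right_asymptotic_class_def by simp
  then obtain x0 where x0: "x0 \<in> X" "C = right_asym X `` {x0}" by (rule quotientE) blast
  have memC: "y \<in> C \<longleftrightarrow> (x0, y) \<in> right_asym X" for y using x0 by simp
  have inX: "y \<in> X" if "y \<in> C" for y
    using that unfolding memC asym_char by simp
  have "acls C"
  proof
    have "(x0, x0) \<in> right_asym X" by (rule asym_refl[OF x0(1)])
    then have "x0 \<in> C" unfolding memC .
    then show "C \<noteq> {}" by blast
  next
    fix x :: "int \<Rightarrow> 'a" and k assume x: "x \<in> C"
    have sx: "shiftpow k x \<in> X" by (rule shift_X[OF assms(1) inX[OF x]])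
    have "pos_part (shiftpow k x) = pos_part (shiftpow 0 (shiftpow k x))" by simp
    then have "(x, shiftpow k x) \<in> right_asym X" unfolding right_asym_def using inX[OF x] sx by blast
    then show "shiftpow k x \<in> C" unfolding memC using asym_trans x[unfolded memC] by blast
  next
    fix x y :: "int \<Rightarrow> 'a" assume "x \<in> C" "y \<in> C"
    then have "(x, y) \<in> right_asym X" unfolding memC using asym_sym asym_trans by metis
    then show "\<exists>i j. pos_part (shiftpow i x) = pos_part (shiftpow j y)" unfolding right_asym_def by blast
  next
    fix w :: "int \<Rightarrow> 'a" assume h: "\<And>N::nat. \<exists>y\<in>C. \<forall>t. t \<ge> - int N \<longrightarrow> y t = w t"
    have "\<forall>N::nat. \<exists>y\<in>X. \<forall>i. \<bar>i\<bar> \<le> int N \<longrightarrow> y i = w i"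
    proof
      fix N :: nat
      obtain y where y: "y \<in> C" "\<forall>t. t \<ge> - int N \<longrightarrow> y t = w t" using h by blast
      have "\<forall>i. \<bar>i\<bar> \<le> int N \<longrightarrow> y i = w i"
      proof (intro allI impI)
        fix i :: int assume "\<bar>i\<bar> \<le> int N"
        then have "i \<ge> - int N" by simp
        then show "y i = w i" using y(2) by blast
      qed
      then show "\<exists>y\<in>X. \<forall>i. \<bar>i\<bar> \<le> int N \<longrightarrow> y i = w i" using inX[OF y(1)] by blast
    qed
    moreover have "closed_seq X" using assms(1) unfolding shift_space_def by simp
    ultimately have wX: "w \<in> X" unfolding closed_seq_def by blast
    obtain y where y: "y \<in> C" "\<forall>t. t \<ge> - int 0 \<longrightarrow> y t = w t" using h by blast
    have "pos_part (shiftpow 0 y) = pos_part (shiftpow 0 w)" using y(2) by (simp add: pos_part_def)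
    then have "(y, w) \<in> right_asym X" unfolding right_asym_def using inX[OF y(1)] wX by blast
    then show "w \<in> C" unfolding memC using asym_trans y(1)[unfolded memC] by blast
  qed
  then show ?thesis by (rule acls.main)
qed


end
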